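(* Assume CH. There exists a set $A\subseteq\mathbb{R}^2$ which is a Hamel basis of $\mathbb{R}^2$ over $\mathbb{Q}$ and such that for every continuous injection $h:\mathbb{R}\to\mathbb{R}^2$ which is a homeomorphism onto its image, the set $h^{-1}(A\cap h(\mathbb{R}))$ is a strong Luzin subset of $\mathbb{R}$ (equivalently, $A\cap h(\mathbb{R})$ is a strong Luzin set in the space $h(\mathbb{R})$).
   Context: A Luzin set is a set $L\subseteq\mathbb{R}$ with $|L|=\mathfrak{c}$ such that $L\cap M$ is countable for every meager $M\subseteq\mathbb{R}$; it is a strong Luzin set if moreover $L\cap B$ is uncountable for every non-meager Borel set $B\subseteq\mathbb{R}$. A Hamel basis of $\mathbb{R}^2$ is a basis of $\mathbb{R}^2$ as a vector space over $\mathbb{Q}$. *)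

theory Defs
  imports "HOL-Analysis.Analysis" "HOL-Library.Equipollence"
begin

definition nowhere_dense :: "'a::topological_space set \<Rightarrow> bool" where
  "nowhere_dense S \<longleftrightarrow> interior (closure S) = {}"

definition meager :: "'a::topological_space set \<Rightarrow> bool" where
  "meager M \<longleftrightarrow> (\<exists>F :: nat \<Rightarrow> 'a set. (\<forall>n. nowhere_dense (F n)) \<and> M \<subseteq> (\<Union>n. F n))"

definition CH :: bool where
  "CH \<longleftrightarrow> (\<forall>S :: real set. uncountable S \<longrightarrow> S \<approx> (UNIV :: real set))"

definition luzin_set :: "real set \<Rightarrow> bool" where
  "luzin_set L \<longleftrightarrow> L \<approx> (UNIV :: real set) \<and> (\<forall>M. meager M \<longrightarrow> countable (L \<inter> M))"

definition strong_luzin_set :: "real set \<Rightarrow> bool" where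
  "strong_luzin_set L \<longleftrightarrow> luzin_set L \<and>
     (\<forall>B. B \<in> sets borel \<and> \<not> meager B \<longrightarrow> uncountable (L \<inter> B))"

definition qscale :: "rat \<Rightarrow> real \<times> real \<Rightarrow> real \<times> real" where
  "qscale q v = of_rat q *\<^sub>R v"

definition hamel_basis_R2 :: "(real \<times> real) set \<Rightarrow> bool" where
  "hamel_basis_R2 A \<longleftrightarrow> \<not> module.dependent qscale A \<and> module.span qscale A = UNIV"

end

theory Submission
  imports Defs
begin

definition Emb :: "(real \<Rightarrow> real \<times> real) set" where
  "Emb = {h. continuous_on UNIV h \<and> inj h \<and> (\<exists>g. homeomorphism UNIV (range h) h g)}"

definition thin :: "(real \<times> real) set \<Rightarrow> bool" where
  "thin K \<longleftrightarrow> compact K \<and> (\<forall>h\<in>Emb. interior (h -` K) = {})"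

lemma baire_point:
  fixes J :: "real set"
  assumes "open J" "J \<noteq> {}" "countable \<C>" "\<And>C. C \<in> \<C> \<Longrightarrow> closed C \<and> interior C = {}"
  shows "\<exists>t\<in>J. \<forall>C\<in>\<C>. t \<notin> C"
proof -
  have "UNIV \<subseteq> closure (\<Inter> (uminus ` \<C>))"
  proof (rule Baire)
    show "countable (uminus ` \<C>)" using assms(3) by simp
    fix T assume "T \<in> uminus ` \<C>"
    then obtain C where C: "C \<in> \<C>" "T = - C" by auto
    show "openin (top_of_set UNIV) T \<and> UNIV \<subseteq> closure T"
      using assms(4)[OF C(1)] C(2) by (auto simp: closure_complement open_Compl)
  qed auto
  hence "closure (\<Inter> (uminus ` \<C>)) = UNIV" by auto
  hence "J \<inter> \<Inter> (uminus ` \<C>) \<noteq> {}"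
    using open_Int_closure_eq_empty[OF assms(1)] assms(2) by auto
  thus ?thesis by auto
qed

lemma nowhere_dense_closure: "nowhere_dense (F::real set) \<Longrightarrow> closed (closure F) \<and> interior (closure F) = {}"
  by (simp add: nowhere_dense_def)

lemma open_not_meager:
  fixes U :: "real set"
  assumes "open U" "U \<noteq> {}" shows "\<not> meager U"
proof
  assume "meager U"
  then obtain F :: "nat \<Rightarrow> real set" where F: "\<forall>n. nowhere_dense (F n)" "U \<subseteq> (\<Union>n. F n)"
    unfolding meager_def by blast
  obtain t where "t \<in> U" "\<forall>C\<in>range (\<lambda>n. closure (F n)). t \<notin> C"
    using baire_point[OF assms, of "range (\<lambda>n. closure (F n))"] F(1) nowhere_dense_closure by blast
  thus False using F(2) closure_subset by blast
qed

lemma meager_subset: "meager B \<Longrightarrow> A \<subseteq> B \<Longrightarrow> meager A"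
  unfolding meager_def by blast

lemma meager_UN:
  fixes M :: "nat \<Rightarrow> 'a::topological_space set"
  assumes "\<And>n. meager (M n)" shows "meager (\<Union>n. M n)"
proof -
  have "\<forall>n. \<exists>F::nat \<Rightarrow> 'a set. (\<forall>k. nowhere_dense (F k)) \<and> M n \<subseteq> (\<Union>k. F k)"
    using assms unfolding meager_def by blast
  then obtain F :: "nat \<Rightarrow> nat \<Rightarrow> 'a set" where F0: "\<forall>n. (\<forall>k. nowhere_dense (F n k)) \<and> M n \<subseteq> (\<Union>k. F n k)"
    by (rule choice[THEN exE]) auto
  hence F: "\<And>n k. nowhere_dense (F n k)" "\<And>n. M n \<subseteq> (\<Union>k. F n k)" by auto
  define G where "G i = F (fst (prod_decode i)) (snd (prod_decode i))" for i
  have "nowhere_dense (G i)" for i by (simp add: G_def F)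
  moreover have "(\<Union>n. M n) \<subseteq> (\<Union>i. G i)"
  proof
    fix x assume "x \<in> (\<Union>n. M n)"
    then obtain n k where "x \<in> F n k" using F(2) by blast
    hence "x \<in> G (prod_encode (n,k))" by (simp add: G_def)
    thus "x \<in> (\<Union>i. G i)" by blast
  qed
  ultimately show ?thesis unfolding meager_def by blast
qed

lemma meager_Un: "meager A \<Longrightarrow> meager B \<Longrightarrow> meager (A \<union> B)"
proof -
  assume a: "meager A" "meager B"
  have "meager (\<Union>n. if n = (0::nat) then A else B)" by (rule meager_UN[of "\<lambda>n. if n = (0::nat) then A else B"]) (simp add: a)
  moreover have "(\<Union>n. if n = (0::nat) then A else B) = A \<union> B" by (auto split: if_splits)
  ultimately show ?thesis by simp
qed

lemma nowhere_dense_meager: "nowhere_dense A \<Longrightarrow> meager A"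
  unfolding meager_def by (rule exI[of _ "\<lambda>n. A"]) auto

lemma meager_empty: "meager {}"
  unfolding meager_def nowhere_dense_def by (rule exI[of _ "\<lambda>n. {}"]) auto

definition bp :: "real set \<Rightarrow> bool" where
  "bp S \<longleftrightarrow> (\<exists>U. open U \<and> meager (U - S) \<and> meager (S - U))"

lemma bp_compl: assumes "bp S" shows "bp (- S)"
proof -
  obtain U where U: "open U" "meager (U - S)" "meager (S - U)" using assms bp_def by blast
  let ?V = "interior (- U)"
  have nd: "nowhere_dense (- U - ?V)"
  proof -
    have cl: "closed (- U - ?V)" using U(1) by (intro closed_Diff) (auto simp: open_interior)
    have "interior (- U - ?V) = {}"
    proof -
      have "interior (- U - ?V) \<subseteq> interior (- U)" by (rule interior_mono) auto
      moreover have "interior (- U - ?V) \<subseteq> - ?V" using interior_subset by blast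
      ultimately show ?thesis by blast
    qed
    thus ?thesis using cl by (simp add: nowhere_dense_def closure_closed)
  qed
  have "- S - ?V \<subseteq> (U - S) \<union> (- U - ?V)" by blast
  hence m1: "meager (- S - ?V)" using meager_Un[OF U(2) nowhere_dense_meager[OF nd]] meager_subset by blast
  have "?V - - S \<subseteq> S - U" using interior_subset by blast
  hence m2: "meager (?V - - S)" using U(3) meager_subset by blast
  show ?thesis unfolding bp_def using m1 m2 by (intro exI[of _ ?V]) auto
qed

lemma bp_UN: assumes "\<And>i::nat. bp (S i)" shows "bp (\<Union>i. S i)"
proof -
  obtain U where U: "\<And>i. open (U i)" "\<And>i. meager (U i - S i)" "\<And>i. meager (S i - U i)"
    using assms unfolding bp_def by metis
  have "(\<Union>i. U i) - (\<Union>i. S i) \<subseteq> (\<Union>i. U i - S i)" by blast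
  hence m1: "meager ((\<Union>i. U i) - (\<Union>i. S i))" using meager_UN[of "\<lambda>i. U i - S i"] U(2) meager_subset by blast
  have "(\<Union>i. S i) - (\<Union>i. U i) \<subseteq> (\<Union>i. S i - U i)" by blast
  hence m2: "meager ((\<Union>i. S i) - (\<Union>i. U i))" using meager_UN[of "\<lambda>i. S i - U i"] U(3) meager_subset by blast
  show ?thesis unfolding bp_def using m1 m2 U(1) by (intro exI[of _ "\<Union>i. U i"]) auto
qed

lemma borel_bp: assumes "B \<in> sets borel" shows "bp B"
proof -
  have "B \<in> sigma_sets UNIV {S. open S}" using assms sets_borel by auto
  thus ?thesis
  proof (induction rule: sigma_sets.induct)
    case (Basic a) thus ?case unfolding bp_def using meager_empty by (intro exI[of _ a]) auto
  next
    case Empty thus ?case unfolding bp_def using meager_empty by (intro exI[of _ "{}"]) auto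
  next
    case (Compl a) thus ?case using bp_compl by (simp add: Compl_eq_Diff_UNIV[symmetric])
  next
    case (Union a) thus ?case using bp_UN by blast
  qed
qed

lemma thin_image:
  assumes h0: "h0 \<in> Emb" and C: "closed C" "interior C = {}"
  shows "thin (h0 ` (C \<inter> {a..b}))"
  unfolding thin_def
proof (intro conjI ballI)
  have h0c: "continuous_on UNIV h0" using h0 by (simp add: Emb_def)
  show "compact (h0 ` (C \<inter> {a..b}))"
    by (rule compact_continuous_image[OF continuous_on_subset[OF h0c]])
       (auto intro: compact_Int_closed C)
  fix h assume h: "h \<in> Emb"
  obtain g0 where g0: "homeomorphism UNIV (range h0) h0 g0" using h0 by (auto simp: Emb_def)
  have g0c: "continuous_on (range h0) g0" and g0h0: "\<And>t. g0 (h0 t) = t"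
    using g0 unfolding homeomorphism_def by auto
  have hc: "continuous_on UNIV h" and hi: "inj h" using h by (auto simp: Emb_def)
  show "interior (h -` h0 ` (C \<inter> {a..b})) = {}"
  proof (rule ccontr)
    assume "interior (h -` h0 ` (C \<inter> {a..b})) \<noteq> {}"
    then obtain x where "x \<in> interior (h -` h0 ` (C \<inter> {a..b}))" by auto
    then obtain e where e: "e > 0" "ball x e \<subseteq> h -` h0 ` (C \<inter> {a..b})"
      by (meson mem_interior)
    define S where "S = {x - e/2 .. x + e/2}"
    have S: "S \<subseteq> h -` h0 ` (C \<inter> {a..b})"
      using e unfolding S_def by (intro subset_trans[OF _ e(2)]) (auto simp: dist_real_def)
    have "h ` S \<subseteq> range h0" using S by auto
    have f_cont: "continuous_on S (g0 \<circ> h)"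
      by (rule continuous_on_compose[OF continuous_on_subset[OF hc] continuous_on_subset[OF g0c \<open>h ` S \<subseteq> range h0\<close>]]) auto
    have conn: "connected ((g0 \<circ> h) ` S)"
      by (rule connected_continuous_image[OF f_cont]) (simp add: S_def)
    have sub: "(g0 \<circ> h) ` S \<subseteq> C"
    proof
      fix y assume "y \<in> (g0 \<circ> h) ` S"
      then obtain s where "s \<in> S" "y = g0 (h s)" by auto
      with S obtain c where "c \<in> C" "h s = h0 c" by auto
      thus "y \<in> C" using \<open>y = g0 (h s)\<close> g0h0 by auto
    qed
    have "x - e/2 \<in> S" "x + e/2 \<in> S" using e by (auto simp: S_def)
    then obtain c1 c2 where c: "c1 \<in> C" "c2 \<in> C" "h (x - e/2) = h0 c1" "h (x + e/2) = h0 c2"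
      using S by blast
    have "h (x - e/2) \<noteq> h (x + e/2)" using hi e(1) by (auto dest: injD)
    hence "c1 \<noteq> c2" using c by auto
    have "c1 \<in> (g0 \<circ> h) ` S"
      using c g0h0 by (auto intro!: image_eqI[OF _ \<open>x - e/2 \<in> S\<close>])
    moreover have "c2 \<in> (g0 \<circ> h) ` S"
      using c g0h0 by (auto intro!: image_eqI[OF _ \<open>x + e/2 \<in> S\<close>])
    ultimately have "{min c1 c2 .. max c1 c2} \<subseteq> C"
      using connected_contains_Icc[OF conn] sub
      by (metis (no_types, lifting) max_def min_def order_trans)
    hence "{min c1 c2 <..< max c1 c2} \<subseteq> interior C"
      by (intro interior_maximal) auto
    moreover have "{min c1 c2 <..< max c1 c2} \<noteq> {}" using \<open>c1 \<noteq> c2\<close>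
      by (simp add: min_def max_def)
    ultimately show False using C(2) by auto
  qed
qed

lemma thin_empty: "thin {}"
  by (simp add: thin_def)

lemma line_Emb: "(\<lambda>t. v - (t, 0)) \<in> Emb" "(\<lambda>t::real. (t, 0::real)) \<in> Emb"
proof -
  have "homeomorphism UNIV (range (\<lambda>t. v - (t, 0))) (\<lambda>t. v - (t, 0)) (\<lambda>p. fst v - fst p)"
    unfolding homeomorphism_def by (auto intro!: continuous_intros simp: image_image)
  moreover have "inj (\<lambda>t::real. v - (t, 0::real))" by (auto simp: inj_def)
  ultimately show "(\<lambda>t. v - (t, 0)) \<in> Emb" unfolding Emb_def by (auto intro!: continuous_intros)
  have "homeomorphism UNIV (range (\<lambda>t::real. (t, 0::real))) (\<lambda>t. (t, 0)) fst"
    unfolding homeomorphism_def by (auto intro!: continuous_intros simp: image_image)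
  moreover have "inj (\<lambda>t::real. (t, 0::real))" by (auto simp: inj_def)
  ultimately show "(\<lambda>t::real. (t, 0::real)) \<in> Emb" unfolding Emb_def by (auto intro!: continuous_intros)
qed

lemma thin_preimage: "thin K \<Longrightarrow> h \<in> Emb \<Longrightarrow> closed (h -` K) \<and> interior (h -` K) = {}"
proof -
  assume a: "thin K" "h \<in> Emb"
  hence "closed K" "continuous_on UNIV h" by (auto simp: thin_def Emb_def compact_imp_closed)
  hence "closed (h -` K)" by (rule closed_vimage)
  thus ?thesis using a by (auto simp: thin_def)
qed

interpretation Q: vector_space qscale
  by unfold_locales (simp_all add: qscale_def of_rat_add of_rat_mult scaleR_add_right scaleR_add_left)

definition lsum :: "(rat \<times> (real \<times> real)) list \<Rightarrow> real \<times> real" where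
  "lsum xs = sum_list (map (\<lambda>(q,v). qscale q v) xs)"

lemma lsum_scale: "lsum (map (\<lambda>(q,v). (c*q, v)) xs) = qscale c (lsum xs)"
  by (induction xs) (auto simp: lsum_def Q.scale_right_distrib)

lemma countable_span:
  assumes "countable S" shows "countable (Q.span S)"
proof -
  let ?T = "lsum ` lists (UNIV \<times> S)"
  have "countable ?T" using assms by (intro countable_image countable_lists) auto
  moreover have "Q.span S \<subseteq> ?T"
  proof (rule Q.span_minimal)
    show "S \<subseteq> ?T"
    proof
      fix x assume "x \<in> S"
      hence "[(1, x)] \<in> lists (UNIV \<times> S)" by auto
      moreover have "lsum [(1,x)] = x" by (simp add: lsum_def)
      ultimately show "x \<in> ?T" by (metis image_eqI)
    qed
    show "Q.subspace ?T"
    proof (rule Q.subspaceI)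
      show "0 \<in> ?T" by (rule image_eqI[of _ _ "[]"]) (auto simp: lsum_def)
    next
      fix x y assume "x \<in> ?T" "y \<in> ?T"
      then obtain xs ys where "xs \<in> lists (UNIV \<times> S)" "ys \<in> lists (UNIV \<times> S)" "x = lsum xs" "y = lsum ys" by auto
      thus "x + y \<in> ?T" by (intro image_eqI[of _ _ "xs @ ys"]) (auto simp: lsum_def)
    next
      fix c x assume "x \<in> ?T"
      then obtain xs where "xs \<in> lists (UNIV \<times> S)" "x = lsum xs" by auto
      thus "qscale c x \<in> ?T"
        by (intro image_eqI[of _ _ "map (\<lambda>(q,v). (c*q, v)) xs"]) (auto simp: lsum_scale)
    qed
  qed
  ultimately show ?thesis by (rule countable_subset[rotated])
qed

lemma closed_sets_inj:
  "\<exists>\<phi>::'a::second_countable_topology set \<Rightarrow> nat set. inj_on \<phi> {C. closed C}"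
proof -
  obtain B :: "'a set set" where B: "countable B" "topological_basis B" using ex_countable_basis by auto
  define \<phi> where "\<phi> C = to_nat_on B ` {b\<in>B. b \<inter> C = {}}" for C :: "'a set"
  have rep: "C = - \<Union>{b\<in>B. b \<inter> C = {}}" if cC: "closed C" for C
  proof
    show "C \<subseteq> - \<Union>{b\<in>B. b \<inter> C = {}}" by auto
    show "- \<Union>{b\<in>B. b \<inter> C = {}} \<subseteq> C"
    proof
      fix x assume x: "x \<in> - \<Union>{b\<in>B. b \<inter> C = {}}"
      show "x \<in> C"
      proof (rule ccontr)
        assume "x \<notin> C"
        then obtain b where "b \<in> B" "x \<in> b" "b \<subseteq> - C"
          using topological_basisE[OF B(2), of "- C" x] cC by auto
        thus False using x by auto
      qed
    qed
  qed
  have inj: "inj_on \<phi> {C. closed C}"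
  proof (rule inj_onI)
    fix C D assume C: "C \<in> {C. closed C}" and D: "D \<in> {C. closed C}" and e: "\<phi> C = \<phi> D"
    have s1: "{b\<in>B. b \<inter> C = {}} \<subseteq> B" and s2: "{b\<in>B. b \<inter> D = {}} \<subseteq> B" by auto
    have eqn: "{b\<in>B. b \<inter> C = {}} = {b\<in>B. b \<inter> D = {}}"
      using e unfolding \<phi>_def by (simp only: inj_on_image_eq_iff[OF inj_on_to_nat_on[OF B(1)] s1 s2])
    have "C = - \<Union>{b\<in>B. b \<inter> C = {}}" using C by (intro rep) simp
    also have "\<dots> = - \<Union>{b\<in>B. b \<inter> D = {}}" by (simp only: eqn)
    also have "\<dots> = D" using D by (intro rep[symmetric]) simp
    finally show "C = D" .
  qed
  show ?thesis by (rule exI[of _ \<phi>]) (rule inj)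
qed

lemma surj_from_real:
  fixes A :: "'a set"
  assumes "A \<noteq> {}" "inj_on (f :: 'a \<Rightarrow> nat set) A"
  shows "\<exists>e::real \<Rightarrow> 'a. range e = A"
proof -
  obtain \<psi> :: "nat set \<Rightarrow> real" where \<psi>: "bij_betw \<psi> UNIV UNIV"
    using nat_sets_eqpoll_reals unfolding eqpoll_def by auto
  let ?g = "\<psi> \<circ> f"
  have ig: "inj_on ?g A" using assms(2) \<psi> by (auto simp: bij_betw_def inj_on_def)
  obtain a0 where a0: "a0 \<in> A" using assms(1) by auto
  define e where "e x = (if x \<in> ?g ` A then inv_into A ?g x else a0)" for x
  have "range e = A"
  proof
    show "range e \<subseteq> A" using a0 by (auto simp: e_def inv_into_into)
    show "A \<subseteq> range e"
    proof
      fix a assume "a \<in> A"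
      hence "e (?g a) = a" unfolding e_def using ig inv_into_f_f by (metis imageI)
      thus "a \<in> range e" by (metis rangeI)
    qed
  qed
  thus ?thesis by blast
qed

lemma Emb_enum: "\<exists>e::real \<Rightarrow> (real \<Rightarrow> real \<times> real). range e = Emb"
proof -
  obtain \<phi> :: "(real \<times> (real \<times> real)) set \<Rightarrow> nat set" where \<phi>: "inj_on \<phi> {C. closed C}"
    using closed_sets_inj[where 'a="real \<times> (real \<times> real)"] by (elim exE)
  define G where "G h = {p :: real \<times> (real \<times> real). snd p = h (fst p)}" for h :: "real \<Rightarrow> real \<times> real"
  have cl: "closed (G h)" if "h \<in> Emb" for h
  proof -
    have "continuous_on UNIV h" using that by (simp add: Emb_def)
    hence "continuous_on UNIV (h \<circ> fst)" by (intro continuous_on_compose) (auto intro: continuous_on_subset continuous_intros)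
    thus ?thesis unfolding G_def by (intro closed_Collect_eq) (auto intro: continuous_intros simp: o_def)
  qed
  have iG: "inj_on G Emb"
  proof (rule inj_onI)
    fix h h' assume "G h = G h'"
    hence a: "\<forall>p. (snd p = h (fst p)) = (snd p = h' (fst p))" by (simp add: G_def set_eq_iff)
    show "h = h'"
    proof
      fix t show "h t = h' t" using a[rule_format, of "(t, h t)"] by simp
    qed
  qed
  have "G ` Emb \<subseteq> {C. closed C}" using cl by auto
  hence "inj_on (\<phi> \<circ> G) Emb" by (intro comp_inj_on iG inj_on_subset[OF \<phi>])
  moreover have "Emb \<noteq> {}" using line_Emb by blast
  ultimately show ?thesis by (intro surj_from_real)
qed

lemma thin_enum: "\<exists>e::real \<Rightarrow> (real \<times> real) set. range e = {K. thin K}"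
proof -
  obtain \<phi> :: "(real \<times> real) set \<Rightarrow> nat set" where \<phi>: "inj_on \<phi> {C. closed C}"
    using closed_sets_inj[where 'a="real \<times> real"] by (elim exE)
  have "inj_on \<phi> {K. thin K}" using \<phi> by (rule inj_on_subset) (auto simp: thin_def compact_imp_closed)
  moreover have "{K. thin K} \<noteq> {}" using thin_empty by blast
  ultimately show ?thesis by (intro surj_from_real)
qed

lemma real_pair_bij: "\<exists>\<beta>::real \<Rightarrow> real \<times> real. bij \<beta>"
proof -
  have "(card_of ((UNIV::real set) \<times> (UNIV::real set)), card_of (UNIV::real set)) \<in> ordIso"
    by (rule card_of_Times_same_infinite) (simp add: infinite_UNIV_char_0)
  then obtain f where "bij_betw f ((UNIV::real set) \<times> (UNIV::real set)) (UNIV::real set)"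
    using card_of_ordIso by blast
  hence "bij (inv_into UNIV f)" by (simp add: bij_betw_inv_into)
  thus ?thesis by blast
qed

lemma omega1_order:
  assumes "CH"
  shows "\<exists>lt::real \<Rightarrow> real \<Rightarrow> bool. wf {(x,y). lt x y} \<and> (\<forall>x y z. lt x y \<longrightarrow> lt y z \<longrightarrow> lt x z)
     \<and> (\<forall>x y. x \<noteq> y \<longrightarrow> lt x y \<or> lt y x) \<and> (\<forall>x. countable {y. lt y x})"
proof -
  let ?r = "card_of (UNIV::real set)"
  have wo: "well_order_on UNIV ?r" using card_of_Well_order Field_card_of by metis
  define lt where "lt x y \<longleftrightarrow> (x,y) \<in> ?r \<and> x \<noteq> y" for x y
  have "{(x,y). lt x y} = ?r - Id" by (auto simp: lt_def)
  hence wf: "wf {(x,y). lt x y}" using wo by (simp add: well_order_on_def)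
  have tr: "trans ?r" and an: "antisym ?r" and tot: "total_on UNIV ?r"
    using wo by (auto simp: well_order_on_def linear_order_on_def partial_order_on_def preorder_on_def)
  have t: "\<forall>x y z. lt x y \<longrightarrow> lt y z \<longrightarrow> lt x z"
    unfolding lt_def using tr an by (metis antisymD transD)
  have l: "\<forall>x y. x \<noteq> y \<longrightarrow> lt x y \<or> lt y x"
    unfolding lt_def using tot by (auto simp: total_on_def)
  have c: "countable {y. lt y x}" for x
  proof (rule ccontr)
    assume u: "uncountable {y. lt y x}"
    have "{y. lt y x} = underS ?r x" by (auto simp: lt_def underS_def)
    moreover have "(card_of (underS ?r x), ?r) \<in> ordLess"
      by (rule card_of_underS[OF card_of_Card_order]) (simp add: Field_card_of)
    moreover have "{y. lt y x} \<approx> (UNIV::real set)" using assms u by (simp add: CH_def)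
    hence "(card_of {y. lt y x}, ?r) \<in> ordIso" by (simp add: eqpoll_def card_of_ordIso[symmetric])
    ultimately show False using not_ordLess_ordIso by metis
  qed
  show ?thesis using wf t l c by blast
qed

definition J :: "rat \<times> nat \<Rightarrow> real set" where
  "J qn = ball (of_rat (fst qn)) (1 / (real (snd qn) + 1))"

lemma J_open: "open (J qn)" and J_ne: "J qn \<noteq> {}"
  by (auto simp: J_def intro!: exI[of _ "of_rat (fst qn)"])

lemma Emb_vimage_countable:
  assumes "h \<in> Emb" "countable S" shows "countable (h -` S)"
proof -
  obtain g where g: "homeomorphism UNIV (range h) h g" using assms(1) by (auto simp: Emb_def)
  hence "\<And>t. g (h t) = t" by (auto simp: homeomorphism_def)
  hence "h -` S \<subseteq> g ` S" by (metis image_eqI subsetI vimageE)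
  thus ?thesis using assms(2) by (metis countable_image countable_subset)
qed

lemma singletons_ok: "C \<in> (\<lambda>s. {s::real}) ` S \<Longrightarrow> closed C \<and> interior C = {}"
  by auto

lemma good_ex_aux:
  fixes A0 :: "(real \<times> real) set" and v :: "real \<times> real"
  assumes A0: "countable A0" "\<not> Q.dependent A0"
    and KK: "countable \<K>" "\<And>K. K \<in> \<K> \<Longrightarrow> thin K"
    and h: "h \<in> Emb"
  shows "\<exists>P. countable P \<and> \<not> Q.dependent (A0 \<union> P) \<and> P \<inter> \<Union>\<K> = {} \<and> v \<in> Q.span (A0 \<union> P)
            \<and> (\<exists>t \<in> J qn. h t \<in> P \<and> h t \<notin> A0)"
proof -
  have "\<exists>X. finite X \<and> \<not> Q.dependent (A0 \<union> X) \<and> X \<inter> \<Union>\<K> = {} \<and> v \<in> Q.span (A0 \<union> X)"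
  proof (cases "v \<in> Q.span A0")
    case True thus ?thesis using A0 by (intro exI[of _ "{}"]) auto
  next
    case False
    let ?L = "\<lambda>t::real. (t, 0::real)" and ?L' = "\<lambda>t::real. v - (t, 0::real)"
    let ?S = "Q.span (insert v A0)"
    have cS: "countable ?S" using A0(1) by (intro countable_span) auto
    let ?C = "(\<lambda>K. ?L -` K) ` \<K> \<union> (\<lambda>K. ?L' -` K) ` \<K> \<union> (\<lambda>s. {s}) ` (?L -` ?S)"
    have "countable ?C" using KK(1) Emb_vimage_countable[OF line_Emb(2) cS] by auto
    moreover have "closed C \<and> interior C = {}" if "C \<in> ?C" for C
      using that
    proof (elim UnE imageE)
      fix K assume "K \<in> \<K>" "C = ?L -` K"
      thus ?thesis using thin_preimage[OF KK(2) line_Emb(2)] by blast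
    next
      fix K assume "K \<in> \<K>" "C = ?L' -` K"
      thus ?thesis using thin_preimage[OF KK(2) line_Emb(1)[of v]] by blast
    next
      fix s assume "C = {s}" thus ?thesis by simp
    qed
    ultimately obtain t where t: "\<forall>C\<in>?C. t \<notin> C"
      using baire_point[of UNIV ?C] by auto
    define x where "x = ?L t"
    define y where "y = v - x"
    have xS: "x \<notin> ?S" using t by (auto simp: x_def)
    have xK: "x \<notin> \<Union>\<K>" and yK: "y \<notin> \<Union>\<K>" using t by (auto simp: x_def y_def)
    have xA0: "x \<notin> Q.span A0" using xS Q.span_mono[of A0 "insert v A0"] by auto
    have i1: "\<not> Q.dependent (insert x A0)" using Q.independent_insertI[OF xA0 A0(2)] .
    have yA: "y \<notin> Q.span (insert x A0)"
    proof
      assume "y \<in> Q.span (insert x A0)"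
      moreover have "x \<in> Q.span (insert x A0)" by (simp add: Q.span_base)
      ultimately have "v \<in> Q.span (insert x A0)" using Q.span_add[of x _ y] by (simp add: y_def)
      hence "x \<in> Q.span (insert v A0)" using Q.in_span_insert False by blast
      thus False using xS by simp
    qed
    have i2: "\<not> Q.dependent (insert y (insert x A0))" using Q.independent_insertI[OF yA i1] .
    have "v \<in> Q.span (A0 \<union> {x, y})"
    proof -
      have "x \<in> Q.span (A0 \<union> {x, y})" "y \<in> Q.span (A0 \<union> {x, y})" by (auto intro: Q.span_base)
      hence "x + y \<in> Q.span (A0 \<union> {x, y})" by (rule Q.span_add)
      thus ?thesis by (simp add: y_def)
    qed
    moreover have "A0 \<union> {x, y} = insert y (insert x A0)" by auto
    ultimately show ?thesis using i2 xK yK by (intro exI[of _ "{x, y}"]) auto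
  qed
  then obtain X where X: "finite X" "\<not> Q.dependent (A0 \<union> X)" "X \<inter> \<Union>\<K> = {}" "v \<in> Q.span (A0 \<union> X)"
    by blast
  let ?S = "Q.span (A0 \<union> X)"
  have cS: "countable ?S" using A0(1) X(1) by (intro countable_span) (auto intro: countable_finite)
  let ?C = "(\<lambda>K. h -` K) ` \<K> \<union> (\<lambda>s. {s}) ` (h -` ?S)"
  have "countable ?C" using KK(1) Emb_vimage_countable[OF h cS] by auto
  moreover have "closed C \<and> interior C = {}" if "C \<in> ?C" for C
    using that
  proof (elim UnE imageE)
    fix K assume "K \<in> \<K>" "C = h -` K"
    thus ?thesis using thin_preimage[OF KK(2) h] by blast
  next
    fix s assume "C = {s}" thus ?thesis by simp
  qed
  ultimately have "\<exists>t\<in>J qn. \<forall>C\<in>?C. t \<notin> C"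
    by (rule baire_point[OF J_open J_ne])
  then obtain t where t: "t \<in> J qn" "\<forall>C\<in>?C. t \<notin> C" by (elim bexE) 
  have tS: "h t \<notin> ?S" and tK: "h t \<notin> \<Union>\<K>" using t(2) by auto
  have i0: "\<not> Q.dependent (insert (h t) (A0 \<union> X))" using Q.independent_insertI[OF tS X(2)] .
  have eq: "insert (h t) (A0 \<union> X) = A0 \<union> (X \<union> {h t})" by auto
  have i3: "\<not> Q.dependent (A0 \<union> (X \<union> {h t}))" using i0 unfolding eq .
  have sp: "v \<in> Q.span (A0 \<union> (X \<union> {h t}))"
    using X(4) Q.span_mono[of "A0 \<union> X" "A0 \<union> (X \<union> {h t})"] by auto
  have nA: "h t \<notin> A0" using tS Q.span_base by blast
  show ?thesis
  proof (intro exI[of _ "X \<union> {h t}"] conjI)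
    show "countable (X \<union> {h t})" using X(1) by (simp add: countable_finite)
    show "\<not> Q.dependent (A0 \<union> (X \<union> {h t}))" by (rule i3)
    show "(X \<union> {h t}) \<inter> \<Union>\<K> = {}" using X(3) tK by blast
    show "v \<in> Q.span (A0 \<union> (X \<union> {h t}))" by (rule sp)
    show "\<exists>s\<in>J qn. h s \<in> X \<union> {h t} \<and> h s \<notin> A0" using t(1) nA by blast
  qed
qed

locale constr =
  fixes lt :: "real \<Rightarrow> real \<Rightarrow> bool" and Ke :: "real \<Rightarrow> (real \<times> real) set"
    and Hc :: "real \<Rightarrow> real \<Rightarrow> real \<times> real" and Nc :: "real \<Rightarrow> rat \<times> nat"
    and Vc :: "real \<Rightarrow> real \<times> real"
  assumes wf: "wf {(x,y). lt x y}"
    and trans: "\<And>x y z. lt x y \<Longrightarrow> lt y z \<Longrightarrow> lt x z"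
    and lin: "\<And>x y. x \<noteq> y \<Longrightarrow> lt x y \<or> lt y x"
    and cnt: "\<And>x. countable {y. lt y x}"
    and Ke_thin: "\<And>a. thin (Ke a)" and Ke_surj: "\<And>K. thin K \<Longrightarrow> K \<in> range Ke"
    and Hc_Emb: "\<And>a. Hc a \<in> Emb"
    and fib: "\<And>h n v. h \<in> Emb \<Longrightarrow> uncountable {a. Hc a = h \<and> Nc a = n \<and> Vc a = v}"
begin

lemma irrefl: "\<not> lt x x"
  using wf_not_refl[OF wf, of x] by simp

lemma ub: assumes "countable S" shows "\<exists>g. \<forall>b\<in>S. lt b g"
proof -
  have "countable (S \<union> (\<Union>b\<in>S. {y. lt y b}))" using assms cnt by auto
  hence "S \<union> (\<Union>b\<in>S. {y. lt y b}) \<noteq> UNIV" using uncountable_UNIV_real by metis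
  then obtain g where g: "g \<notin> S \<union> (\<Union>b\<in>S. {y. lt y b})" by auto
  have "lt b g" if "b \<in> S" for b using g that lin[of b g] by auto
  thus ?thesis by blast
qed

definition le where "le x y \<longleftrightarrow> lt x y \<or> x = y"

definition Fb where "Fb a = \<Union> (Ke ` {b. le b a})"

lemma countable_le: "countable {b. le b a}"
proof -
  have "{b. le b a} = insert a {b. lt b a}" by (auto simp: le_def)
  thus ?thesis using cnt by simp
qed

definition good where
  "good a A0 P \<longleftrightarrow> countable P \<and> \<not> Q.dependent (A0 \<union> P) \<and> P \<inter> Fb a = {} \<and> Vc a \<in> Q.span (A0 \<union> P)
     \<and> (\<exists>t \<in> J (Nc a). Hc a t \<in> P \<and> Hc a t \<notin> A0)"

lemma good_ex: "countable A0 \<Longrightarrow> \<not> Q.dependent A0 \<Longrightarrow> \<exists>P. good a A0 P"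
  unfolding good_def Fb_def
  by (rule good_ex_aux) (auto simp: countable_le Ke_thin Hc_Emb)

definition step where "step a A0 = (SOME P. good a A0 P)"

definition Pf where "Pf = wfrec {(x,y). lt x y} (\<lambda>f a. step a (\<Union>b\<in>{b. lt b a}. f b))"

definition Qf where "Qf a = (\<Union>b\<in>{b. lt b a}. Pf b)"

lemma Pf_eq: "Pf a = step a (Qf a)"
proof -
  have "Pf a = step a (\<Union>b\<in>{b. lt b a}. cut Pf {(x,y). lt x y} a b)"
    unfolding Pf_def by (subst wfrec[OF wf]) simp
  also have "(\<Union>b\<in>{b. lt b a}. cut Pf {(x,y). lt x y} a b) = Qf a"
    unfolding Qf_def by (auto simp: cut_apply)
  finally show ?thesis .
qed

lemma Qf_mono: "lt a b \<Longrightarrow> Qf a \<union> Pf a \<subseteq> Qf b"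
  unfolding Qf_def using trans by blast

lemma main: "good a (Qf a) (Pf a)"
  using wf
proof (induction a rule: wf_induct_rule)
  case (less a)
  hence IH: "\<And>b. lt b a \<Longrightarrow> good b (Qf b) (Pf b)" by auto
  have c: "countable (Qf a)" unfolding Qf_def using cnt IH by (auto simp: good_def)
  have eq: "Qf a = \<Union> ((\<lambda>b. Qf b \<union> Pf b) ` {b. lt b a})"
  proof
    show "Qf a \<subseteq> \<Union> ((\<lambda>b. Qf b \<union> Pf b) ` {b. lt b a})" unfolding Qf_def[of a] by blast
    show "\<Union> ((\<lambda>b. Qf b \<union> Pf b) ` {b. lt b a}) \<subseteq> Qf a" using Qf_mono by blast
  qed
  have "\<not> Q.dependent (\<Union> ((\<lambda>b. Qf b \<union> Pf b) ` {b. lt b a}))"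
  proof (rule Q.independent_Union_directed)
    fix c d assume "c \<in> (\<lambda>b. Qf b \<union> Pf b) ` {b. lt b a}" "d \<in> (\<lambda>b. Qf b \<union> Pf b) ` {b. lt b a}"
    then obtain b b' where "c = Qf b \<union> Pf b" "d = Qf b' \<union> Pf b'" by auto
    thus "c \<subseteq> d \<or> d \<subseteq> c" using lin[of b b'] Qf_mono[of b b'] Qf_mono[of b' b] by auto
  next
    fix c assume "c \<in> (\<lambda>b. Qf b \<union> Pf b) ` {b. lt b a}"
    thus "\<not> Q.dependent c" using IH by (auto simp: good_def)
  qed
  hence "\<not> Q.dependent (Qf a)" using eq by simp
  then obtain P where "good a (Qf a) P" using good_ex c by blast
  hence "good a (Qf a) (step a (Qf a))" unfolding step_def by (rule someI)
  thus ?case using Pf_eq by simp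
qed

definition Af where "Af = (\<Union>a. Pf a)"

lemma Af_indep: "\<not> Q.dependent Af"
proof -
  have eq: "Af = \<Union> (range (\<lambda>b. Qf b \<union> Pf b))" unfolding Af_def Qf_def by blast
  have "\<not> Q.dependent (\<Union> (range (\<lambda>b. Qf b \<union> Pf b)))"
  proof (rule Q.independent_Union_directed)
    fix c d assume "c \<in> range (\<lambda>b. Qf b \<union> Pf b)" "d \<in> range (\<lambda>b. Qf b \<union> Pf b)"
    then obtain b b' where "c = Qf b \<union> Pf b" "d = Qf b' \<union> Pf b'" by auto
    thus "c \<subseteq> d \<or> d \<subseteq> c" using lin[of b b'] Qf_mono[of b b'] Qf_mono[of b' b] by auto
  next
    fix c assume "c \<in> range (\<lambda>b. Qf b \<union> Pf b)"
    thus "\<not> Q.dependent c" using main by (auto simp: good_def)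
  qed
  thus ?thesis using eq by simp
qed

lemma Af_span: "Q.span Af = UNIV"
proof -
  have "v \<in> Q.span Af" for v
  proof -
    have "{a. Hc a = Hc 0 \<and> Nc a = Nc 0 \<and> Vc a = v} \<noteq> {}"
      using fib[OF Hc_Emb[of 0], of "Nc 0" v] by (metis countable_empty)
    then obtain a where a: "Vc a = v" by blast
    have "v \<in> Q.span (Qf a \<union> Pf a)" using main[of a] a by (simp add: good_def)
    moreover have "Qf a \<union> Pf a \<subseteq> Af" unfolding Af_def Qf_def by blast
    ultimately show ?thesis using Q.span_mono by blast
  qed
  thus ?thesis by auto
qed

lemma hamel: "hamel_basis_R2 Af"
  unfolding hamel_basis_R2_def using Af_indep Af_span by simp

lemma avoid: "p \<in> Pf a \<Longrightarrow> p \<in> Ke d \<Longrightarrow> lt a d"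
  using main[of a] lin[of a d] by (auto simp: good_def Fb_def le_def)

lemma Af_Ke: "Af \<inter> Ke d \<subseteq> Qf d"
  unfolding Af_def Qf_def using avoid by blast

lemma Qf_countable: "countable (Qf a)"
  unfolding Qf_def using cnt main by (auto simp: good_def)

end

context constr begin

lemma meager_cover:
  assumes h: "h \<in> Emb" and M: "meager M"
  shows "\<exists>D. countable D \<and> (\<forall>t\<in>M. \<exists>d\<in>D. h t \<in> Ke d)"
proof -
  obtain F :: "nat \<Rightarrow> real set" where F: "\<forall>n. nowhere_dense (F n)" "M \<subseteq> (\<Union>n. F n)"
    using M unfolding meager_def by blast
  define K where "K n m = h ` (closure (F n) \<inter> {- real m .. real m})" for n m :: nat
  have "thin (K n m)" for n m
    unfolding K_def using F(1) by (intro thin_image h) (auto simp: nowhere_dense_def)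
  hence "\<exists>d. Ke d = K n m" for n m using Ke_surj by (metis imageE)
  then obtain \<delta> where \<delta>: "\<And>n m. Ke (\<delta> n m) = K n m" by metis
  have "\<exists>d\<in>range (\<lambda>p. \<delta> (fst p) (snd p)). h t \<in> Ke d" if tM: "t \<in> M" for t
  proof -
    obtain n where "t \<in> F n" using F(2) tM by auto
    define m where "m = nat \<lceil>\<bar>t\<bar>\<rceil>"
    have "t \<in> closure (F n) \<inter> {- real m .. real m}"
      using \<open>t \<in> F n\<close> closure_subset unfolding m_def by (auto, linarith+)
    hence "h t \<in> Ke (\<delta> n m)" by (simp add: \<delta> K_def)
    thus ?thesis by (intro bexI[of _ "\<delta> n m"]) (auto intro: image_eqI[of _ _ "(n,m)"])
  qed
  thus ?thesis by (intro exI[of _ "range (\<lambda>p. \<delta> (fst p) (snd p))"]) auto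
qed

lemma luzin_part:
  assumes h: "h \<in> Emb" and M: "meager M"
  shows "countable (h -` Af \<inter> M)"
proof -
  obtain D where D: "countable D" "\<forall>t\<in>M. \<exists>d\<in>D. h t \<in> Ke d" using meager_cover[OF h M] by blast
  have "h -` Af \<inter> M \<subseteq> (\<Union>d\<in>D. h -` Qf d)" using D(2) Af_Ke by blast
  moreover have "countable (\<Union>d\<in>D. h -` Qf d)"
    using D(1) Emb_vimage_countable[OF h Qf_countable] by auto
  ultimately show ?thesis by (rule countable_subset)
qed

lemma J_sub:
  assumes "open U" "x \<in> U" shows "\<exists>qn. J qn \<subseteq> U"
proof -
  obtain e where e: "e > 0" "ball x e \<subseteq> U" using assms open_contains_ball by blast
  obtain m :: nat where m: "inverse (real (Suc m)) < e/2" using reals_Archimedean e(1) by (metis half_gt_zero)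
  have r: "1 / (real m + 1) < e/2" using m by (simp add: field_simps)
  obtain q where q: "x < of_rat q" "of_rat q < x + 1 / (real m + 1)"
    using of_rat_dense[of x "x + 1 / (real m + 1)"] by auto
  have "J (q, m) \<subseteq> ball x e"
  proof
    fix y assume "y \<in> J (q, m)"
    hence "dist (of_rat q) y < 1 / (real m + 1)" by (simp add: J_def)
    thus "y \<in> ball x e" using q r by (auto simp: dist_real_def)
  qed
  thus ?thesis using e(2) by blast
qed

lemma strong_part:
  assumes h: "h \<in> Emb" and B: "B \<in> sets borel" "\<not> meager B"
  shows "uncountable (h -` Af \<inter> B)"
proof -
  obtain U where U: "open U" "meager (U - B)" "meager (B - U)" using borel_bp[OF B(1)] bp_def by blast
  have "U \<noteq> {}" using U(3) B(2) by auto
  then obtain qn where qn: "J qn \<subseteq> U" using J_sub[OF U(1)] by blast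
  have mD: "meager (J qn - B)" using U(2) qn meager_subset by blast
  obtain D where D: "countable D" "\<forall>t\<in>J qn - B. \<exists>d\<in>D. h t \<in> Ke d" using meager_cover[OF h mD] by blast
  obtain g where g: "\<forall>d\<in>D. lt d g" using ub[OF D(1)] by blast
  define \<Sigma> where "\<Sigma> = {a. Hc a = h \<and> Nc a = qn \<and> Vc a = 0} - {a. lt a g}"
  have u\<Sigma>: "uncountable \<Sigma>"
  proof
    assume "countable \<Sigma>"
    hence c: "countable (\<Sigma> \<union> {a. lt a g})" using cnt by auto
    have sub: "{a. Hc a = h \<and> Nc a = qn \<and> Vc a = 0} \<subseteq> \<Sigma> \<union> {a. lt a g}" by (auto simp: \<Sigma>_def)
    have "countable {a. Hc a = h \<and> Nc a = qn \<and> Vc a = 0}" by (rule countable_subset[OF sub c])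
    thus False using fib[OF h, of qn 0] by simp
  qed
  define T where "T a = (SOME t. t \<in> J (Nc a) \<and> Hc a t \<in> Pf a \<and> Hc a t \<notin> Qf a)" for a
  have T: "T a \<in> J (Nc a) \<and> Hc a (T a) \<in> Pf a \<and> Hc a (T a) \<notin> Qf a" for a
  proof -
    have "\<exists>t. t \<in> J (Nc a) \<and> Hc a t \<in> Pf a \<and> Hc a t \<notin> Qf a" using main[of a] unfolding good_def by blast
    thus ?thesis unfolding T_def by (rule someI_ex)
  qed
  have inB: "T a \<in> h -` Af \<inter> B" if "a \<in> \<Sigma>" for a
  proof -
    have a: "Hc a = h" "Nc a = qn" "\<not> lt a g" using that by (auto simp: \<Sigma>_def)
    have "h (T a) \<in> Af" using T[of a] a by (auto simp: Af_def)
    moreover have "T a \<in> B"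
    proof (rule ccontr)
      assume "T a \<notin> B"
      hence "T a \<in> J qn - B" using T[of a] a by auto
      then obtain d where "d \<in> D" "h (T a) \<in> Ke d" using D(2) by blast
      hence "lt a d" using avoid[of "h (T a)" a d] T[of a] a by simp
      hence "lt a g" using g \<open>d \<in> D\<close> trans by blast
      thus False using a by simp
    qed
    ultimately show ?thesis by simp
  qed
  have "inj_on T \<Sigma>"
  proof (rule inj_onI)
    fix a b assume ab: "a \<in> \<Sigma>" "b \<in> \<Sigma>" "T a = T b"
    have hh: "Hc a = h" "Hc b = h" using ab by (auto simp: \<Sigma>_def)
    show "a = b"
    proof (rule ccontr)
      assume "a \<noteq> b"
      hence "lt a b \<or> lt b a" using lin by blast
      thus False
      proof
        assume "lt a b"
        hence "Pf a \<subseteq> Qf b" using Qf_mono by blast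
        thus False using T[of a] T[of b] hh ab(3) by auto
      next
        assume "lt b a"
        hence "Pf b \<subseteq> Qf a" using Qf_mono by blast
        thus False using T[of a] T[of b] hh ab(3) by auto
      qed
    qed
  qed
  hence "uncountable (T ` \<Sigma>)" using u\<Sigma> countable_image_inj_on by blast
  moreover have "T ` \<Sigma> \<subseteq> h -` Af \<inter> B" using inB by blast
  ultimately show ?thesis by (metis countable_subset)
qed

lemma strong_luzin:
  assumes ch: "CH" and h: "h \<in> Emb"
  shows "strong_luzin_set (h -` (Af \<inter> range h))"
proof -
  have eq: "h -` (Af \<inter> range h) = h -` Af" by auto
  have "uncountable (h -` Af \<inter> UNIV)"
    by (rule strong_part[OF h]) (use open_not_meager[of UNIV] in auto)
  hence "h -` Af \<approx> (UNIV :: real set)" using ch by (simp add: CH_def)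
  moreover have "\<forall>M. meager M \<longrightarrow> countable (h -` Af \<inter> M)" using luzin_part[OF h] by blast
  moreover have "\<forall>B. B \<in> sets borel \<and> \<not> meager B \<longrightarrow> uncountable (h -` Af \<inter> B)" using strong_part[OF h] by blast
  ultimately show ?thesis unfolding strong_luzin_set_def luzin_set_def eq by blast
qed

end

theorem mainTheorem8:
  assumes "CH"
  shows "\<exists>A :: (real \<times> real) set. hamel_basis_R2 A \<and>
           (\<forall>h :: real \<Rightarrow> real \<times> real.
              continuous_on UNIV h \<and> inj h \<and> (\<exists>g. homeomorphism UNIV (range h) h g) \<longrightarrow>
              strong_luzin_set (h -` (A \<inter> range h)))"
proof -
  obtain lt :: "real \<Rightarrow> real \<Rightarrow> bool" where lt: "wf {(x,y). lt x y}" "\<forall>x y z. lt x y \<longrightarrow> lt y z \<longrightarrow> lt x z"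
     "\<forall>x y. x \<noteq> y \<longrightarrow> lt x y \<or> lt y x" "\<forall>x. countable {y. lt y x}"
    using omega1_order[OF assms] by (elim exE conjE) blast
  obtain Ke :: "real \<Rightarrow> (real \<times> real) set" where Ke: "range Ke = {K. thin K}" using thin_enum by (elim exE)
  obtain He :: "real \<Rightarrow> (real \<Rightarrow> real \<times> real)" where He: "range He = Emb" using Emb_enum by (elim exE)
  obtain \<beta> :: "real \<Rightarrow> real \<times> real" where \<beta>: "bij \<beta>" using real_pair_bij by (elim exE)
  have surj: "\<exists>a. \<beta> a = p" for p using \<beta> by (metis bij_pointE)
  define Hc where "Hc a = He (fst (\<beta> (fst (\<beta> a))))" for a
  define Nc where "Nc a = (from_nat (nat \<lfloor>fst (\<beta> (snd (\<beta> (fst (\<beta> a)))))\<rfloor>) :: rat \<times> nat)" for a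
  define Vc where "Vc a = \<beta> (snd (\<beta> (snd (\<beta> (fst (\<beta> a))))))" for a
  interpret C: constr lt Ke Hc Nc Vc
  proof
    show "wf {(x,y). lt x y}" by (rule lt(1))
    show "\<And>x y z. lt x y \<Longrightarrow> lt y z \<Longrightarrow> lt x z" using lt(2) by blast
    show "\<And>x y. x \<noteq> y \<Longrightarrow> lt x y \<or> lt y x" using lt(3) by blast
    show "\<And>x. countable {y. lt y x}" using lt(4) by blast
    show "\<And>a. thin (Ke a)" using Ke by auto
    show "\<And>K. thin K \<Longrightarrow> K \<in> range Ke" using Ke by auto
    show "\<And>a. Hc a \<in> Emb" using He by (auto simp: Hc_def)
  next
    fix h and n :: "rat \<times> nat" and v :: "real \<times> real" assume h: "h \<in> Emb"
    obtain c1 where c1: "He c1 = h" using h He by (metis imageE)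
    obtain c3 where c3: "\<beta> c3 = v" using surj by blast
    obtain c' where c': "\<beta> c' = (real (to_nat n), c3)" using surj by blast
    obtain c where c: "\<beta> c = (c1, c')" using surj by blast
    have sub: "{a. fst (\<beta> a) = c} \<subseteq> {a. Hc a = h \<and> Nc a = n \<and> Vc a = v}"
    proof
      fix a assume "a \<in> {a. fst (\<beta> a) = c}"
      hence a: "fst (\<beta> a) = c" by simp
      show "a \<in> {a. Hc a = h \<and> Nc a = n \<and> Vc a = v}" using a by (simp add: Hc_def Nc_def Vc_def c c' c1 c3)
    qed
    have "uncountable {a. fst (\<beta> a) = c}"
    proof
      assume "countable {a. fst (\<beta> a) = c}"
      hence "countable (snd ` \<beta> ` {a. fst (\<beta> a) = c})" by simp
      moreover have "snd ` \<beta> ` {a. fst (\<beta> a) = c} = UNIV"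
      proof (intro set_eqI iffI)
        fix y :: real
        obtain a where "\<beta> a = (c, y)" using surj by blast
        thus "y \<in> snd ` \<beta> ` {a. fst (\<beta> a) = c}" by (auto intro!: image_eqI[of _ _ "(c,y)"] image_eqI[of _ _ a])
      qed auto
      ultimately show False using uncountable_UNIV_real by simp
    qed
    thus "uncountable {a. Hc a = h \<and> Nc a = n \<and> Vc a = v}" using sub countable_subset by blast
  qed
  show ?thesis
  proof (intro exI[of _ C.Af] conjI allI impI)
    show "hamel_basis_R2 C.Af" by (rule C.hamel)
    fix h :: "real \<Rightarrow> real \<times> real"
    assume "continuous_on UNIV h \<and> inj h \<and> (\<exists>g. homeomorphism UNIV (range h) h g)"
    hence "h \<in> Emb" by (simp add: Emb_def)
    thus "strong_luzin_set (h -` (C.Af \<inter> range h))" by (rule C.strong_luzin[OF assms])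
  qed
qed


end
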